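(* Let $((A,\cdot),N)$ be a Nijenhuis algebra, $((M,\triangleright,\triangleleft),N_M)$ a Nijenhuis bimodule, and $0\to((M,0),N_M)\xrightarrow{i}((E,\cdot_E),N_E)\xrightarrow{p}((A,\cdot),N)\to0$ an abelian extension whose induced Nijenhuis bimodule structure on $M$ is the given one. Fix a linear section $s$ of $p$ and let $(\chi,F)$ be the associated 2-cocycle. Then a pair $(\beta,\alpha)\in\mathrm{Aut}(M,N_M)\times\mathrm{Aut}(A,N)$ is inducible if and only if: (I) $\beta(a\triangleright u)=\alpha(a)\triangleright\beta(u)$ and $\beta(u\triangleleft a)=\beta(u)\triangleleft\alpha(a)$ for all $a\in A$, $u\in M$; and (II) there exists a linear map $\lambda:A\to M$ with $\beta(\chi(a,b))-\chi(\alpha(a),\alpha(b))=\alpha(a)\triangleright\lambda(b)+\lambda(a)\triangleleft\alpha(b)-\lambda(a\cdot b)$ and $\beta(F(a))-F(\alpha(a))=N_M(\lambda(a))-\lambda(N(a))$ for all $a,b\in A$.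
   Context: Over a field of characteristic $0$. Nijenhuis algebra: associative $(A,\cdot)$ with linear $N$, $N(a)N(b)=N(N(a)b+aN(b)-N(ab))$; homomorphisms are algebra maps commuting with the operators. Nijenhuis bimodule: $A$-bimodule with linear $N_M$ such that $N(a)\triangleright N_M(u)=N_M(N(a)\triangleright u+a\triangleright N_M(u)-N_M(a\triangleright u))$ and $N_M(u)\triangleleft N(a)=N_M(N_M(u)\triangleleft a+u\triangleleft N(a)-N_M(u\triangleleft a))$. An abelian extension is a Nijenhuis algebra $((E,\cdot_E),N_E)$ with a short exact sequence of Nijenhuis algebra homomorphisms as displayed, $M$ having zero multiplication; identify $M$ with $i(M)$. Its induced bimodule structure is $a\triangleright u=s(a)\cdot_Eu$, $u\triangleleft a=u\cdot_Es(a)$ for any section $s$. For the section $s$, $\chi(a,b)=s(a)\cdot_Es(b)-s(a\cdot b)\in M$ and $F(a)=N_E(s(a))-s(N(a))\in M$. $\mathrm{Aut}(A,N)$: algebra automorphisms of $A$ commuting with $N$; $\mathrm{Aut}(M,N_M)$: linear bijections $\beta:M\to M$ with $\beta N_M=N_M\beta$; $\mathrm{Aut}_M(E,N_E)$: Nijenhuis algebra automorphisms $\varphi$ of $E$ with $\varphi(M)\subseteq M$. For such $\varphi$, $\tau(\varphi)=(\varphi|_M,\ p\varphi s)\in\mathrm{Aut}(M,N_M)\times\mathrm{Aut}(A,N)$ (independent of $s$). A pair $(\beta,\alpha)$ is inducible if $(\beta,\alpha)=\tau(\varphi)$ for some $\varphi\in\mathrm{Aut}_M(E,N_E)$. *)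

theory Defs
  imports Complex_Main
begin

definition bilin ::
  "('k::field \<Rightarrow> 'a::ab_group_add \<Rightarrow> 'a) \<Rightarrow> ('k \<Rightarrow> 'b::ab_group_add \<Rightarrow> 'b)
   \<Rightarrow> ('k \<Rightarrow> 'c::ab_group_add \<Rightarrow> 'c) \<Rightarrow> ('a \<Rightarrow> 'b \<Rightarrow> 'c) \<Rightarrow> bool" where
  "bilin sa sb sc f \<longleftrightarrow>
     (\<forall>x. Vector_Spaces.linear sb sc (f x)) \<and> (\<forall>y. Vector_Spaces.linear sa sc (\<lambda>x. f x y))"

definition assoc_algebra :: "('k::field \<Rightarrow> 'a::ab_group_add \<Rightarrow> 'a) \<Rightarrow> ('a \<Rightarrow> 'a \<Rightarrow> 'a) \<Rightarrow> bool" where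
  "assoc_algebra sA mul \<longleftrightarrow> vector_space sA \<and> bilin sA sA sA mul \<and>
     (\<forall>x y z. mul (mul x y) z = mul x (mul y z))"

definition nijenhuis_algebra ::
  "('k::field \<Rightarrow> 'a::ab_group_add \<Rightarrow> 'a) \<Rightarrow> ('a \<Rightarrow> 'a \<Rightarrow> 'a) \<Rightarrow> ('a \<Rightarrow> 'a) \<Rightarrow> bool" where
  "nijenhuis_algebra sA mul N \<longleftrightarrow> assoc_algebra sA mul \<and> Vector_Spaces.linear sA sA N \<and>
     (\<forall>a b. mul (N a) (N b) = N (mul (N a) b + mul a (N b) - N (mul a b)))"

text \<open>A-bimodule with left action l (a |> u) and right action r (u <| a).\<close>
definition bimodule ::
  "('k::field \<Rightarrow> 'a::ab_group_add \<Rightarrow> 'a) \<Rightarrow> ('a \<Rightarrow> 'a \<Rightarrow> 'a) \<Rightarrow>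
   ('k \<Rightarrow> 'm::ab_group_add \<Rightarrow> 'm) \<Rightarrow> ('a \<Rightarrow> 'm \<Rightarrow> 'm) \<Rightarrow> ('m \<Rightarrow> 'a \<Rightarrow> 'm) \<Rightarrow> bool" where
  "bimodule sA mulA sM l r \<longleftrightarrow> assoc_algebra sA mulA \<and> vector_space sM \<and>
     bilin sA sM sM l \<and> bilin sM sA sM r \<and>
     (\<forall>a b u. l (mulA a b) u = l a (l b u)) \<and>
     (\<forall>a b u. r u (mulA a b) = r (r u a) b) \<and>
     (\<forall>a b u. r (l a u) b = l a (r u b))"

definition nijenhuis_bimodule ::
  "('k::field \<Rightarrow> 'a::ab_group_add \<Rightarrow> 'a) \<Rightarrow> ('a \<Rightarrow> 'a \<Rightarrow> 'a) \<Rightarrow> ('a \<Rightarrow> 'a) \<Rightarrow>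
   ('k \<Rightarrow> 'm::ab_group_add \<Rightarrow> 'm) \<Rightarrow> ('a \<Rightarrow> 'm \<Rightarrow> 'm) \<Rightarrow> ('m \<Rightarrow> 'a \<Rightarrow> 'm) \<Rightarrow> ('m \<Rightarrow> 'm) \<Rightarrow> bool" where
  "nijenhuis_bimodule sA mulA N sM l r NM \<longleftrightarrow>
     nijenhuis_algebra sA mulA N \<and> bimodule sA mulA sM l r \<and> Vector_Spaces.linear sM sM NM \<and>
     (\<forall>a u. l (N a) (NM u) = NM (l (N a) u + l a (NM u) - NM (l a u))) \<and>
     (\<forall>a u. r (NM u) (N a) = NM (r (NM u) a + r u (N a) - NM (r u a)))"

definition nij_alg_hom ::
  "('k::field \<Rightarrow> 'a::ab_group_add \<Rightarrow> 'a) \<Rightarrow> ('a \<Rightarrow> 'a \<Rightarrow> 'a) \<Rightarrow> ('a \<Rightarrow> 'a) \<Rightarrow>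
   ('k \<Rightarrow> 'b::ab_group_add \<Rightarrow> 'b) \<Rightarrow> ('b \<Rightarrow> 'b \<Rightarrow> 'b) \<Rightarrow> ('b \<Rightarrow> 'b) \<Rightarrow> ('a \<Rightarrow> 'b) \<Rightarrow> bool" where
  "nij_alg_hom sA mulA NA sB mulB NB f \<longleftrightarrow> Vector_Spaces.linear sA sB f \<and>
     (\<forall>x y. f (mulA x y) = mulB (f x) (f y)) \<and> (\<forall>x. f (NA x) = NB (f x))"

definition abelian_extension ::
  "('k::field \<Rightarrow> 'a::ab_group_add \<Rightarrow> 'a) \<Rightarrow> ('a \<Rightarrow> 'a \<Rightarrow> 'a) \<Rightarrow> ('a \<Rightarrow> 'a) \<Rightarrow>
   ('k \<Rightarrow> 'm::ab_group_add \<Rightarrow> 'm) \<Rightarrow> ('m \<Rightarrow> 'm) \<Rightarrow>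
   ('k \<Rightarrow> 'e::ab_group_add \<Rightarrow> 'e) \<Rightarrow> ('e \<Rightarrow> 'e \<Rightarrow> 'e) \<Rightarrow> ('e \<Rightarrow> 'e) \<Rightarrow>
   ('m \<Rightarrow> 'e) \<Rightarrow> ('e \<Rightarrow> 'a) \<Rightarrow> bool" where
  "abelian_extension sA mulA N sM NM sE mulE NE i p \<longleftrightarrow>
     nijenhuis_algebra sA mulA N \<and>
     nijenhuis_algebra sM (\<lambda>_ _. 0) NM \<and>
     nijenhuis_algebra sE mulE NE \<and>
     nij_alg_hom sM (\<lambda>_ _. 0) NM sE mulE NE i \<and>
     nij_alg_hom sE mulE NE sA mulA N p \<and>
     inj i \<and> surj p \<and> range i = {x. p x = 0}"

definition linear_section ::
  "('k::field \<Rightarrow> 'a::ab_group_add \<Rightarrow> 'a) \<Rightarrow> ('k \<Rightarrow> 'e::ab_group_add \<Rightarrow> 'e) \<Rightarrow>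
   ('e \<Rightarrow> 'a) \<Rightarrow> ('a \<Rightarrow> 'e) \<Rightarrow> bool" where
  "linear_section sA sE p s \<longleftrightarrow> Vector_Spaces.linear sA sE s \<and> (\<forall>a. p (s a) = a)"

definition nij_alg_aut ::
  "('k::field \<Rightarrow> 'a::ab_group_add \<Rightarrow> 'a) \<Rightarrow> ('a \<Rightarrow> 'a \<Rightarrow> 'a) \<Rightarrow> ('a \<Rightarrow> 'a) \<Rightarrow> ('a \<Rightarrow> 'a) \<Rightarrow> bool" where
  "nij_alg_aut sA mul N f \<longleftrightarrow> nij_alg_hom sA mul N sA mul N f \<and> bij f"

definition nij_mod_aut ::
  "('k::field \<Rightarrow> 'm::ab_group_add \<Rightarrow> 'm) \<Rightarrow> ('m \<Rightarrow> 'm) \<Rightarrow> ('m \<Rightarrow> 'm) \<Rightarrow> bool" where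
  "nij_mod_aut sM NM b \<longleftrightarrow> Vector_Spaces.linear sM sM b \<and> bij b \<and> (\<forall>u. b (NM u) = NM (b u))"

text \<open>(beta, alpha) is inducible: there is phi in Aut_M(E,N_E) with tau(phi) = (beta, alpha),
  where phi restricted to M (identified with i(M)) is beta, and p phi s = alpha.\<close>
definition inducible ::
  "('k::field \<Rightarrow> 'e::ab_group_add \<Rightarrow> 'e) \<Rightarrow> ('e \<Rightarrow> 'e \<Rightarrow> 'e) \<Rightarrow> ('e \<Rightarrow> 'e) \<Rightarrow>
   ('m \<Rightarrow> 'e) \<Rightarrow> ('e \<Rightarrow> 'a) \<Rightarrow> ('a \<Rightarrow> 'e) \<Rightarrow> ('m \<Rightarrow> 'm) \<Rightarrow> ('a \<Rightarrow> 'a) \<Rightarrow> bool" where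
  "inducible sE mulE NE i p s b a \<longleftrightarrow>
     (\<exists>\<phi>. nij_alg_aut sE mulE NE \<phi> \<and> \<phi> ` range i \<subseteq> range i \<and>
          (\<forall>u. \<phi> (i u) = i (b u)) \<and> (\<forall>x. p (\<phi> (s x)) = a x))"

end

theory Submission
  imports Defs
begin

lemma lin_add: "Vector_Spaces.linear s1 s2 f \<Longrightarrow> f (x + y) = f x + f y"
  by (simp add: Vector_Spaces.linear_iff)
lemma lin_scale: "Vector_Spaces.linear s1 s2 f \<Longrightarrow> f (s1 c x) = s2 c (f x)"
  by (simp add: Vector_Spaces.linear_iff)
lemma add_zero0: fixes f :: "'a::ab_group_add \<Rightarrow> 'b::ab_group_add"
  assumes "\<And>x y. f (x + y) = f x + f y" shows "f 0 = 0"
  using assms[of 0 0] by simp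
lemma add_diff0: fixes f :: "'a::ab_group_add \<Rightarrow> 'b::ab_group_add"
  assumes "\<And>x y. f (x + y) = f x + f y" shows "f (x - y) = f x - f y"
proof -
  have "f x = f (x - y) + f y" using assms[of "x-y" y] by simp
  then show ?thesis by (simp add: eq_diff_eq)
qed
lemma vs_distrib: "vector_space sc \<Longrightarrow> sc c (x + y) = sc c x + sc c y"
  by (simp add: vector_space.vector_space_assms(1))
lemma vs_diff: "vector_space sc \<Longrightarrow> sc c (x - y) = sc c x - sc c y"
  unfolding module_iff_vector_space[symmetric] by (rule module.scale_right_diff_distrib)

theorem proposition5p1:
  fixes sA :: "'k::field_char_0 \<Rightarrow> 'a::ab_group_add \<Rightarrow> 'a"
    and mulA :: "'a \<Rightarrow> 'a \<Rightarrow> 'a" and N :: "'a \<Rightarrow> 'a"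
    and sM :: "'k \<Rightarrow> 'm::ab_group_add \<Rightarrow> 'm"
    and l :: "'a \<Rightarrow> 'm \<Rightarrow> 'm" and r :: "'m \<Rightarrow> 'a \<Rightarrow> 'm" and NM :: "'m \<Rightarrow> 'm"
    and sE :: "'k \<Rightarrow> 'e::ab_group_add \<Rightarrow> 'e"
    and mulE :: "'e \<Rightarrow> 'e \<Rightarrow> 'e" and NE :: "'e \<Rightarrow> 'e"
    and i :: "'m \<Rightarrow> 'e" and p :: "'e \<Rightarrow> 'a" and s :: "'a \<Rightarrow> 'e"
    and \<chi> :: "'a \<Rightarrow> 'a \<Rightarrow> 'm" and F :: "'a \<Rightarrow> 'm"
    and \<beta> :: "'m \<Rightarrow> 'm" and \<alpha> :: "'a \<Rightarrow> 'a"
  assumes bimod: "nijenhuis_bimodule sA mulA N sM l r NM"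
    and ext: "abelian_extension sA mulA N sM NM sE mulE NE i p"
    and induced_l: "\<forall>a u. i (l a u) = mulE (s a) (i u)"
    and induced_r: "\<forall>a u. i (r u a) = mulE (i u) (s a)"
    and sec: "linear_section sA sE p s"
    and chi_def: "\<forall>a b. i (\<chi> a b) = mulE (s a) (s b) - s (mulA a b)"
    and F_def: "\<forall>a. i (F a) = NE (s a) - s (N a)"
    and beta_aut: "nij_mod_aut sM NM \<beta>"
    and alpha_aut: "nij_alg_aut sA mulA N \<alpha>"
  shows "inducible sE mulE NE i p s \<beta> \<alpha> \<longleftrightarrow>
     ((\<forall>a u. \<beta> (l a u) = l (\<alpha> a) (\<beta> u) \<and> \<beta> (r u a) = r (\<beta> u) (\<alpha> a)) \<and>
      (\<exists>lam. Vector_Spaces.linear sA sM lam \<and>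
         (\<forall>a b. \<beta> (\<chi> a b) - \<chi> (\<alpha> a) (\<alpha> b) =
                 l (\<alpha> a) (lam b) + r (lam a) (\<alpha> b) - lam (mulA a b)) \<and>
         (\<forall>a. \<beta> (F a) - F (\<alpha> a) = NM (lam a) - lam (N a))))"
  proof -
  have NAlg: "nijenhuis_algebra sA mulA N" and BM: "bimodule sA mulA sM l r"
    and NMlin: "Vector_Spaces.linear sM sM NM"
    using bimod unfolding nijenhuis_bimodule_def by auto
  have lu: "\<And>a u v. l a (u + v) = l a u + l a v"
    using BM unfolding bimodule_def bilin_def by (meson lin_add)
  have la: "\<And>a b u. l (a + b) u = l a u + l b u"
    using BM unfolding bimodule_def bilin_def
    by (metis (no_types, lifting) lin_add)
  have ru: "\<And>a u v. r (u + v) a = r u a + r v a"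
    using BM unfolding bimodule_def bilin_def
    by (metis (no_types, lifting) lin_add)
  have ra: "\<And>a b u. r u (a + b) = r u a + r u b"
    using BM unfolding bimodule_def bilin_def by (meson lin_add)
  have vsM: "vector_space sM" using BM unfolding bimodule_def by auto
  have NMa: "\<And>u v. NM (u + v) = NM u + NM v" using NMlin by (rule lin_add)
  have NAE: "nijenhuis_algebra sE mulE NE" using ext unfolding abelian_extension_def by auto
  have vsE: "vector_space sE" using NAE unfolding nijenhuis_algebra_def assoc_algebra_def by auto
  have Ea: "\<And>x y z. mulE (x + y) z = mulE x z + mulE y z"
    using NAE unfolding nijenhuis_algebra_def assoc_algebra_def bilin_def
    by (metis (no_types, lifting) lin_add)
  have Eb: "\<And>x y z. mulE x (y + z) = mulE x y + mulE x z"
    using NAE unfolding nijenhuis_algebra_def assoc_algebra_def bilin_def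
    by (meson lin_add)
  have NEa: "\<And>x y. NE (x + y) = NE x + NE y"
    using NAE unfolding nijenhuis_algebra_def by (meson lin_add)
  have ihom: "nij_alg_hom sM (\<lambda>_ _. 0) NM sE mulE NE i" and phom: "nij_alg_hom sE mulE NE sA mulA N p"
    and iinj: "inj i" and psurj: "surj p" and ker: "range i = {x. p x = 0}"
    using ext unfolding abelian_extension_def by auto
  have iadd: "\<And>u v. i (u + v) = i u + i v" using ihom unfolding nij_alg_hom_def by (meson lin_add)
  have iscale: "\<And>c u. i (sM c u) = sE c (i u)" using ihom unfolding nij_alg_hom_def by (meson lin_scale)
  have i0: "i 0 = 0" using iadd by (rule add_zero0)
  have imul: "\<And>u v. mulE (i u) (i v) = 0" using ihom i0 unfolding nij_alg_hom_def by metis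
  have iN: "\<And>u. NE (i u) = i (NM u)" using ihom unfolding nij_alg_hom_def by metis
  have padd: "\<And>x y. p (x + y) = p x + p y" using phom unfolding nij_alg_hom_def by (meson lin_add)
  have pmul: "\<And>x y. p (mulE x y) = mulA (p x) (p y)" using phom unfolding nij_alg_hom_def by metis
  have pN: "\<And>x. p (NE x) = N (p x)" using phom unfolding nij_alg_hom_def by metis
  have pi: "\<And>u. p (i u) = 0" using ker by auto
  have sadd: "\<And>a b. s (a + b) = s a + s b" using sec unfolding linear_section_def by (meson lin_add)
  have sscale: "\<And>c a. s (sA c a) = sE c (s a)" using sec unfolding linear_section_def by (meson lin_scale)
  have ps: "\<And>a. p (s a) = a" using sec unfolding linear_section_def by auto
  have s0: "s 0 = 0" using sadd by (rule add_zero0)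
  have aadd: "\<And>x y. \<alpha> (x + y) = \<alpha> x + \<alpha> y" using alpha_aut unfolding nij_alg_aut_def nij_alg_hom_def by (meson lin_add)
  have ascale: "\<And>c x. \<alpha> (sA c x) = sA c (\<alpha> x)" using alpha_aut unfolding nij_alg_aut_def nij_alg_hom_def by (meson lin_scale)
  have amul: "\<And>x y. \<alpha> (mulA x y) = mulA (\<alpha> x) (\<alpha> y)" using alpha_aut unfolding nij_alg_aut_def nij_alg_hom_def by metis
  have aN: "\<And>x. \<alpha> (N x) = N (\<alpha> x)" using alpha_aut unfolding nij_alg_aut_def nij_alg_hom_def by metis
  have abij: "bij \<alpha>" using alpha_aut unfolding nij_alg_aut_def by auto
  have badd: "\<And>x y. \<beta> (x + y) = \<beta> x + \<beta> y" using beta_aut unfolding nij_mod_aut_def by (meson lin_add)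
  have bscale: "\<And>c x. \<beta> (sM c x) = sM c (\<beta> x)" using beta_aut unfolding nij_mod_aut_def by (meson lin_scale)
  have bN: "\<And>x. \<beta> (NM x) = NM (\<beta> x)" using beta_aut unfolding nij_mod_aut_def by metis
  have bbij: "bij \<beta>" using beta_aut unfolding nij_mod_aut_def by auto
  have sl: "\<And>a u. mulE (s a) (i u) = i (l a u)" using induced_l by simp
  have sr: "\<And>a u. mulE (i u) (s a) = i (r u a)" using induced_r by simp
  have ss: "\<And>a b. mulE (s a) (s b) = s (mulA a b) + i (\<chi> a b)" using chi_def by (simp add: algebra_simps)
  have sN: "\<And>a. NE (s a) = s (N a) + i (F a)" using F_def by (simp add: algebra_simps)
  have mul_su: "\<And>a u b v. mulE (s a + i u) (s b + i v) = s (mulA a b) + i (\<chi> a b + l a v + r u b)"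
    by (simp add: Ea Eb sl sr ss imul iadd add_ac)
  have N_su: "\<And>a u. NE (s a + i u) = s (N a) + i (F a + NM u)"
    by (simp add: NEa sN iN iadd add_ac)
  have p_su: "\<And>a u. p (s a + i u) = a" by (simp add: padd ps pi)
  have decomp: "\<And>e. \<exists>a u. e = s a + i u"
  proof -
    fix e
    have "p (e - s (p e)) = 0" using add_diff0[OF padd] ps by simp
    then obtain u where "e - s (p e) = i u" using ker by (metis (mono_tags, lifting) mem_Collect_eq rangeE)
    then have "e = s (p e) + i u" by (simp add: algebra_simps)
    then show "\<exists>a u. e = s a + i u" by blast
  qed
  have su_eq: "\<And>a u b v. (s a + i u = s b + i v) \<longleftrightarrow> a = b \<and> u = v"
  proof -
    fix a u b v
    show "(s a + i u = s b + i v) \<longleftrightarrow> a = b \<and> u = v"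
    proof
      assume h: "s a + i u = s b + i v"
      then have ab: "a = b" using p_su by metis
      with h have "i u = i v" by simp
      with ab show "a = b \<and> u = v" using iinj by (simp add: inj_eq)
    qed simp
  qed
  have iI: "\<And>x y. i x = i y \<Longrightarrow> x = y" using iinj by (simp add: inj_eq)
  have ieq: "\<And>x y. (i x = i y) = (x = y)" using iinj by (simp add: inj_eq)
  have vsA: "vector_space sA" using NAlg unfolding nijenhuis_algebra_def assoc_algebra_def by auto
  have a0: "\<alpha> 0 = 0" using aadd by (rule add_zero0)
  show ?thesis
  proof
    assume "inducible sE mulE NE i p s \<beta> \<alpha>"
    then obtain \<phi> where faut: "nij_alg_aut sE mulE NE \<phi>" and fi: "\<And>u. \<phi> (i u) = i (\<beta> u)"
      and fps: "\<And>x. p (\<phi> (s x)) = \<alpha> x" unfolding inducible_def by blast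
    have fadd: "\<And>x y. \<phi> (x + y) = \<phi> x + \<phi> y" using faut unfolding nij_alg_aut_def nij_alg_hom_def by (meson lin_add)
    have fscale: "\<And>c x. \<phi> (sE c x) = sE c (\<phi> x)" using faut unfolding nij_alg_aut_def nij_alg_hom_def by (meson lin_scale)
    have fmul: "\<And>x y. \<phi> (mulE x y) = mulE (\<phi> x) (\<phi> y)" using faut unfolding nij_alg_aut_def nij_alg_hom_def by metis
    have fN: "\<And>x. \<phi> (NE x) = NE (\<phi> x)" using faut unfolding nij_alg_aut_def nij_alg_hom_def by metis
    define \<mu> where "\<mu> a = inv i (\<phi> (s a) - s (\<alpha> a))" for a
    have fs: "\<And>a. \<phi> (s a) = s (\<alpha> a) + i (\<mu> a)"
    proof -
      fix a
      have "p (\<phi> (s a) - s (\<alpha> a)) = 0" using add_diff0[OF padd] fps ps by simp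
      then have "\<phi> (s a) - s (\<alpha> a) \<in> range i" using ker by simp
      then have "i (\<mu> a) = \<phi> (s a) - s (\<alpha> a)" unfolding \<mu>_def by (simp add: f_inv_into_f)
      then show "\<phi> (s a) = s (\<alpha> a) + i (\<mu> a)" by (simp add: algebra_simps)
    qed
    have fsu: "\<And>a u. \<phi> (s a + i u) = s (\<alpha> a) + i (\<mu> a + \<beta> u)"
      by (simp add: fadd fs fi iadd add_ac)
    have I: "\<forall>a u. \<beta> (l a u) = l (\<alpha> a) (\<beta> u) \<and> \<beta> (r u a) = r (\<beta> u) (\<alpha> a)"
    proof (intro allI conjI)
      fix a u
      have "i (\<beta> (l a u)) = \<phi> (i (l a u))" by (simp add: fi)
      also have "\<dots> = \<phi> (mulE (s a) (i u))" by (simp add: sl)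
      also have "\<dots> = mulE (\<phi> (s a)) (\<phi> (i u))" by (simp add: fmul)
      also have "\<dots> = i (l (\<alpha> a) (\<beta> u))" by (simp add: fs fi Ea sl imul)
      finally show "\<beta> (l a u) = l (\<alpha> a) (\<beta> u)" by (rule iI)
      have "i (\<beta> (r u a)) = \<phi> (i (r u a))" by (simp add: fi)
      also have "\<dots> = \<phi> (mulE (i u) (s a))" by (simp add: sr)
      also have "\<dots> = mulE (\<phi> (i u)) (\<phi> (s a))" by (simp add: fmul)
      also have "\<dots> = i (r (\<beta> u) (\<alpha> a))" by (simp add: fs fi Eb sr imul)
      finally show "\<beta> (r u a) = r (\<beta> u) (\<alpha> a)" by (rule iI)
    qed
    have muadd: "\<And>a b. \<mu> (a + b) = \<mu> a + \<mu> b"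
    proof -
      fix a b
      have "s (\<alpha> (a + b)) + i (\<mu> (a + b)) = \<phi> (s (a + b))" by (simp only: fs)
      also have "\<dots> = \<phi> (s a + s b)" by (simp only: sadd)
      also have "\<dots> = \<phi> (s a) + \<phi> (s b)" by (rule fadd)
      also have "\<dots> = s (\<alpha> a + \<alpha> b) + i (\<mu> a + \<mu> b)" by (simp add: fs sadd iadd add_ac)
      finally have "s (\<alpha> (a + b)) + i (\<mu> (a + b)) = s (\<alpha> a + \<alpha> b) + i (\<mu> a + \<mu> b)" .
      then show "\<mu> (a + b) = \<mu> a + \<mu> b" unfolding su_eq by (rule conjunct2)
    qed
    have muscale: "\<And>c a. \<mu> (sA c a) = sM c (\<mu> a)"
    proof -
      fix c a
      have "s (sA c (\<alpha> a)) + i (\<mu> (sA c a)) = \<phi> (s (sA c a))" by (simp only: fs ascale)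
      also have "\<dots> = \<phi> (sE c (s a))" by (simp only: sscale)
      also have "\<dots> = sE c (\<phi> (s a))" by (rule fscale)
      also have "\<dots> = s (sA c (\<alpha> a)) + i (sM c (\<mu> a))" by (simp add: fs sscale iscale vs_distrib[OF vsE])
      finally have "s (sA c (\<alpha> a)) + i (\<mu> (sA c a)) = s (sA c (\<alpha> a)) + i (sM c (\<mu> a))" .
      then show "\<mu> (sA c a) = sM c (\<mu> a)" unfolding su_eq by (rule conjunct2)
    qed
    have mulin: "Vector_Spaces.linear sA sM \<mu>"
      using vsA vsM muadd muscale by (simp add: Vector_Spaces.linear_iff)
    have chiE: "\<And>a b. \<beta> (\<chi> a b) - \<chi> (\<alpha> a) (\<alpha> b) =
                 l (\<alpha> a) (\<mu> b) + r (\<mu> a) (\<alpha> b) - \<mu> (mulA a b)"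
    proof -
      fix a b
      have "\<phi> (mulE (s a) (s b)) = mulE (\<phi> (s a)) (\<phi> (s b))" by (rule fmul)
      then have "s (\<alpha> (mulA a b)) + i (\<mu> (mulA a b) + \<beta> (\<chi> a b)) =
          s (mulA (\<alpha> a) (\<alpha> b)) + i (\<chi> (\<alpha> a) (\<alpha> b) + l (\<alpha> a) (\<mu> b) + r (\<mu> a) (\<alpha> b))"
        by (simp add: ss fsu fs mul_su)
      then have "\<mu> (mulA a b) + \<beta> (\<chi> a b) = \<chi> (\<alpha> a) (\<alpha> b) + l (\<alpha> a) (\<mu> b) + r (\<mu> a) (\<alpha> b)"
        by (simp add: su_eq ieq amul)
      then show "\<beta> (\<chi> a b) - \<chi> (\<alpha> a) (\<alpha> b) =
                 l (\<alpha> a) (\<mu> b) + r (\<mu> a) (\<alpha> b) - \<mu> (mulA a b)" by (simp add: algebra_simps)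
    qed
    have FE: "\<And>a. \<beta> (F a) - F (\<alpha> a) = NM (\<mu> a) - \<mu> (N a)"
    proof -
      fix a
      have "\<phi> (NE (s a)) = NE (\<phi> (s a))" by (rule fN)
      then have "s (\<alpha> (N a)) + i (\<mu> (N a) + \<beta> (F a)) = s (N (\<alpha> a)) + i (F (\<alpha> a) + NM (\<mu> a))"
        by (simp add: sN fsu fs N_su)
      then have "\<mu> (N a) + \<beta> (F a) = F (\<alpha> a) + NM (\<mu> a)"
        by (simp add: su_eq ieq aN)
      then show "\<beta> (F a) - F (\<alpha> a) = NM (\<mu> a) - \<mu> (N a)" by (simp add: algebra_simps)
    qed
    show "(\<forall>a u. \<beta> (l a u) = l (\<alpha> a) (\<beta> u) \<and> \<beta> (r u a) = r (\<beta> u) (\<alpha> a)) \<and>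
      (\<exists>lam. Vector_Spaces.linear sA sM lam \<and>
         (\<forall>a b. \<beta> (\<chi> a b) - \<chi> (\<alpha> a) (\<alpha> b) =
                 l (\<alpha> a) (lam b) + r (lam a) (\<alpha> b) - lam (mulA a b)) \<and>
         (\<forall>a. \<beta> (F a) - F (\<alpha> a) = NM (lam a) - lam (N a)))"
    proof (intro conjI exI)
      show "\<forall>a u. \<beta> (l a u) = l (\<alpha> a) (\<beta> u) \<and> \<beta> (r u a) = r (\<beta> u) (\<alpha> a)" by (rule I)
      show "Vector_Spaces.linear sA sM \<mu>" by (rule mulin)
      show "\<forall>a b. \<beta> (\<chi> a b) - \<chi> (\<alpha> a) (\<alpha> b) =
                 l (\<alpha> a) (\<mu> b) + r (\<mu> a) (\<alpha> b) - \<mu> (mulA a b)" by (intro allI) (rule chiE)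
      show "\<forall>a. \<beta> (F a) - F (\<alpha> a) = NM (\<mu> a) - \<mu> (N a)" by (intro allI) (rule FE)
    qed
  next
    assume H: "(\<forall>a u. \<beta> (l a u) = l (\<alpha> a) (\<beta> u) \<and> \<beta> (r u a) = r (\<beta> u) (\<alpha> a)) \<and>
      (\<exists>lam. Vector_Spaces.linear sA sM lam \<and>
         (\<forall>a b. \<beta> (\<chi> a b) - \<chi> (\<alpha> a) (\<alpha> b) =
                 l (\<alpha> a) (lam b) + r (lam a) (\<alpha> b) - lam (mulA a b)) \<and>
         (\<forall>a. \<beta> (F a) - F (\<alpha> a) = NM (lam a) - lam (N a)))"
    then have I0: "\<forall>a u. \<beta> (l a u) = l (\<alpha> a) (\<beta> u) \<and> \<beta> (r u a) = r (\<beta> u) (\<alpha> a)"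
      by (rule conjunct1)
    have Il: "\<And>a u. \<beta> (l a u) = l (\<alpha> a) (\<beta> u)" using I0 by simp
    have Ir: "\<And>a u. \<beta> (r u a) = r (\<beta> u) (\<alpha> a)" using I0 by simp
    from H have "\<exists>lam. Vector_Spaces.linear sA sM lam \<and>
         (\<forall>a b. \<beta> (\<chi> a b) - \<chi> (\<alpha> a) (\<alpha> b) =
                 l (\<alpha> a) (lam b) + r (lam a) (\<alpha> b) - lam (mulA a b)) \<and>
         (\<forall>a. \<beta> (F a) - F (\<alpha> a) = NM (lam a) - lam (N a))" by (rule conjunct2)
    then obtain lam where llin: "Vector_Spaces.linear sA sM lam"
      and chiH0: "\<forall>a b. \<beta> (\<chi> a b) - \<chi> (\<alpha> a) (\<alpha> b) =
                 l (\<alpha> a) (lam b) + r (lam a) (\<alpha> b) - lam (mulA a b)"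
      and FH0: "\<forall>a. \<beta> (F a) - F (\<alpha> a) = NM (lam a) - lam (N a)" by (elim exE conjE)
    have chiH: "\<And>a b. \<beta> (\<chi> a b) - \<chi> (\<alpha> a) (\<alpha> b) =
                 l (\<alpha> a) (lam b) + r (lam a) (\<alpha> b) - lam (mulA a b)" using chiH0 by (rule spec2)
    have FH: "\<And>a. \<beta> (F a) - F (\<alpha> a) = NM (lam a) - lam (N a)" using FH0 by (rule spec)
    have ladd: "\<And>a b. lam (a + b) = lam a + lam b" using llin by (rule lin_add)
    have lscale: "\<And>c a. lam (sA c a) = sM c (lam a)" using llin by (rule lin_scale)
    have l0: "lam 0 = 0" using ladd by (rule add_zero0)
    have chiH': "\<And>a b. \<beta> (\<chi> a b) = \<chi> (\<alpha> a) (\<alpha> b) + l (\<alpha> a) (lam b) + r (lam a) (\<alpha> b) - lam (mulA a b)"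
      using chiH by (simp add: algebra_simps diff_eq_eq)
    have FH': "\<And>a. \<beta> (F a) = F (\<alpha> a) + NM (lam a) - lam (N a)"
      using FH by (simp add: algebra_simps diff_eq_eq)
    define \<phi> where "\<phi> e = s (\<alpha> (p e)) + i (lam (p e) + \<beta> (inv i (e - s (p e))))" for e
    have fsu: "\<And>a u. \<phi> (s a + i u) = s (\<alpha> a) + i (lam a + \<beta> u)"
      unfolding \<phi>_def by (simp add: p_su inv_f_f[OF iinj])
    have fadd: "\<And>x y. \<phi> (x + y) = \<phi> x + \<phi> y"
    proof -
      fix x y
      obtain a u where x: "x = s a + i u" using decomp by blast
      obtain b v where y: "y = s b + i v" using decomp by blast
      have xy: "x + y = s (a + b) + i (u + v)" by (simp add: x y sadd iadd add_ac)
      have "\<phi> (x + y) = \<phi> (s (a + b) + i (u + v))" by (simp only: xy)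
      also have "\<dots> = s (\<alpha> (a + b)) + i (lam (a + b) + \<beta> (u + v))" by (rule fsu)
      also have "\<dots> = s (\<alpha> a) + i (lam a + \<beta> u) + (s (\<alpha> b) + i (lam b + \<beta> v))"
        by (simp add: aadd ladd badd sadd iadd add_ac)
      also have "\<dots> = \<phi> x + \<phi> y" by (simp only: x y fsu)
      finally show "\<phi> (x + y) = \<phi> x + \<phi> y" .
    qed
    have fscale: "\<And>c x. \<phi> (sE c x) = sE c (\<phi> x)"
    proof -
      fix c x
      obtain a u where x: "x = s a + i u" using decomp by blast
      have cx: "sE c x = s (sA c a) + i (sM c u)" by (simp add: x vs_distrib[OF vsE] sscale iscale)
      have "\<phi> (sE c x) = \<phi> (s (sA c a) + i (sM c u))" by (simp only: cx)
      also have "\<dots> = s (\<alpha> (sA c a)) + i (lam (sA c a) + \<beta> (sM c u))" by (rule fsu)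
      also have "\<dots> = sE c (s (\<alpha> a) + i (lam a + \<beta> u))"
        by (simp add: ascale lscale bscale sscale iscale iadd vs_distrib[OF vsE] vs_distrib[OF vsM])
      also have "\<dots> = sE c (\<phi> x)" by (simp only: x fsu)
      finally show "\<phi> (sE c x) = sE c (\<phi> x)" .
    qed
    have fmul: "\<And>x y. \<phi> (mulE x y) = mulE (\<phi> x) (\<phi> y)"
    proof -
      fix x y
      obtain a u where x: "x = s a + i u" using decomp by blast
      obtain b v where y: "y = s b + i v" using decomp by blast
      have "\<phi> (mulE x y) = s (\<alpha> (mulA a b)) + i (lam (mulA a b) + \<beta> (\<chi> a b + l a v + r u b))"
        by (simp add: x y mul_su fsu)
      also have "\<dots> = s (mulA (\<alpha> a) (\<alpha> b)) + i (\<chi> (\<alpha> a) (\<alpha> b) + l (\<alpha> a) (lam b + \<beta> v) + r (lam a + \<beta> u) (\<alpha> b))"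
      proof -
        have "lam (mulA a b) + \<beta> (\<chi> a b + l a v + r u b) =
            \<chi> (\<alpha> a) (\<alpha> b) + l (\<alpha> a) (lam b + \<beta> v) + r (lam a + \<beta> u) (\<alpha> b)"
          by (simp add: badd chiH' Il Ir lu ru algebra_simps)
        then show ?thesis by (simp only: amul)
      qed
      also have "\<dots> = mulE (\<phi> x) (\<phi> y)" by (simp add: x y fsu mul_su)
      finally show "\<phi> (mulE x y) = mulE (\<phi> x) (\<phi> y)" .
    qed
    have fN: "\<And>x. \<phi> (NE x) = NE (\<phi> x)"
    proof -
      fix x
      obtain a u where x: "x = s a + i u" using decomp by blast
      have "\<phi> (NE x) = s (\<alpha> (N a)) + i (lam (N a) + \<beta> (F a + NM u))"
        by (simp add: x N_su fsu)
      also have "\<dots> = s (N (\<alpha> a)) + i (F (\<alpha> a) + NM (lam a + \<beta> u))"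
      proof -
        have "lam (N a) + \<beta> (F a + NM u) = F (\<alpha> a) + NM (lam a + \<beta> u)"
          by (simp add: badd FH' bN NMa algebra_simps)
        then show ?thesis by (simp only: aN)
      qed
      also have "\<dots> = NE (\<phi> x)" by (simp add: x fsu N_su)
      finally show "\<phi> (NE x) = NE (\<phi> x)" .
    qed
    have finj: "inj \<phi>"
    proof (rule injI)
      fix x y assume h: "\<phi> x = \<phi> y"
      obtain a u where x: "x = s a + i u" using decomp by blast
      obtain b v where y: "y = s b + i v" using decomp by blast
      from h have "\<alpha> a = \<alpha> b \<and> lam a + \<beta> u = lam b + \<beta> v" by (simp add: x y fsu su_eq)
      then have e1: "\<alpha> a = \<alpha> b" and e2: "lam a + \<beta> u = lam b + \<beta> v" by simp_all
      have ab: "a = b" using injD[OF bij_is_inj[OF abij] e1] .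
      with e2 have "\<beta> u = \<beta> v" by simp
      then have "u = v" using injD[OF bij_is_inj[OF bbij]] by simp
      with ab show "x = y" by (simp add: x y)
    qed
    have fsurj: "surj \<phi>"
    proof -
      have "y \<in> range \<phi>" for y
      proof -
        obtain a' u' where y: "y = s a' + i u'" using decomp by blast
        define a where "a = inv \<alpha> a'"
        define u where "u = inv \<beta> (u' - lam a)"
        have "\<alpha> a = a'" unfolding a_def using abij by (simp add: bij_def surj_f_inv_f)
        moreover have "\<beta> u = u' - lam a" unfolding u_def using bbij by (simp add: bij_def surj_f_inv_f)
        ultimately have "\<phi> (s a + i u) = y" by (simp add: fsu y)
        then show ?thesis by (metis rangeI)
      qed
      then show ?thesis by blast
    qed
    have fi: "\<And>u. \<phi> (i u) = i (\<beta> u)"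
    proof -
      fix u
      have "\<phi> (s 0 + i u) = s (\<alpha> 0) + i (lam 0 + \<beta> u)" by (rule fsu)
      then show "\<phi> (i u) = i (\<beta> u)" by (simp add: s0 a0 l0)
    qed
    have fps: "\<And>x. p (\<phi> (s x)) = \<alpha> x"
    proof -
      fix x
      have "\<phi> (s x + i 0) = s (\<alpha> x) + i (lam x + \<beta> 0)" by (rule fsu)
      then have "p (\<phi> (s x)) = p (s (\<alpha> x) + i (lam x + \<beta> 0))" by (simp add: i0)
      then show "p (\<phi> (s x)) = \<alpha> x" by (simp only: p_su)
    qed
    have flin: "Vector_Spaces.linear sE sE \<phi>"
      using vsE fadd fscale by (simp add: Vector_Spaces.linear_iff)
    show "inducible sE mulE NE i p s \<beta> \<alpha>"
      unfolding inducible_def nij_alg_aut_def nij_alg_hom_def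
    proof (intro exI conjI)
      show "bij \<phi>" using finj fsurj by (simp add: bij_def)
      show "\<phi> ` range i \<subseteq> range i" using fi by auto
      show "Vector_Spaces.linear sE sE \<phi>" by (rule flin)
      show "\<forall>x y. \<phi> (mulE x y) = mulE (\<phi> x) (\<phi> y)" using fmul by simp
      show "\<forall>x. \<phi> (NE x) = NE (\<phi> x)" using fN by simp
      show "\<forall>u. \<phi> (i u) = i (\<beta> u)" using fi by simp
      show "\<forall>x. p (\<phi> (s x)) = \<alpha> x" using fps by simp
    qed
  qed
qed

end
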